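(* Let $k$ be a complex number with $\Re(k)>0$. Then, as the integer $n\to\infty$, $$\int_{0}^{1}(1-u)^k\left(1-\cos 2\pi n u\right)\cot(\pi u)\,du=\frac{\gamma+\log n}{\pi}-\int_{0}^{1}(u^k-u)\cot(\pi u)\,du+o(1).$$
   Context: $\gamma$ is the Euler–Mascheroni constant. *)

theory Defs
  imports "HOL-Analysis.Analysis"
begin

end

theory Submission
  imports Defs "HOL-Complex_Analysis.Complex_Analysis"
begin

lemma trig_step:
  fixes a x :: real assumes "sin x \<noteq> 0"
  shows "(1 - cos (a + 2*x)) * cot x - (1 - cos a) * cot x = sin a + sin (a + 2*x)"
proof -
  have "(1 - cos (a + 2*x)) * cos x - (1 - cos a) * cos x = (sin a + sin (a + 2*x)) * sin x"
    unfolding cos_add sin_add sin_double cos_double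
    using sin_cos_squared_add[of x] by algebra
  then show ?thesis using assms unfolding cot_def by (simp add: field_simps)
qed

lemma int_v_sin:
  "((\<lambda>v::real. (v * sin (2*pi*real m * v))) has_integral (-1/(2*pi*real m))) {0..1}"
proof (cases "m = 0")
  case True then show ?thesis by simp
next
  case False
  define c where "c = 2*pi*real m"
  have c: "c > 0" using False by (simp add: c_def)
  define F where "F v = - v * cos (c * v) / c + sin (c * v) / c^2" for v
  have "((\<lambda>v. v * sin (c * v)) has_integral (F 1 - F 0)) {0..1}"
  proof (rule fundamental_theorem_of_calculus)
    fix v :: real assume "v \<in> {0..1}"
    show "(F has_vector_derivative v * sin (c * v)) (at v within {0..1})"
      unfolding F_def using c
      by (auto intro!: derivative_eq_intros simp flip: has_real_derivative_iff_has_vector_derivative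
               simp: field_simps power2_eq_square)
  qed simp
  moreover have "F 1 - F 0 = -1/(2*pi*real m)"
  proof -
    have e: "2*pi*real m = real (2*m) * pi" by simp
    have "sin (2*pi*real m) = 0" "cos (2*pi*real m) = 1" unfolding e
      by (simp_all only: sin_npi cos_npi) simp
    then show ?thesis unfolding F_def c_def by simp
  qed
  ultimately show ?thesis by (simp add: c_def)
qed

lemma harm_aux:
  fixes H i j a b :: real
  assumes "1/(2*pi*a) = i/(2*pi)" "1/(2*pi*b) = j/(2*pi)"
  shows "(-(2 * H - i) / (2*pi) + (-1/(2*pi*a))) + (-1/(2*pi*b)) = -(2 * (H + j) - j) / (2*pi)"
proof -
  have "-1/(2*pi*a) = - (i/(2*pi))" "-1/(2*pi*b) = - (j/(2*pi))"
    using assms by (simp_all only: minus_divide_left[symmetric])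
  then show ?thesis by (simp add: field_simps)
qed
lemma harm_step: "(-(2 * harm n - inverse (real n)) / (2*pi) + (-1/(2*pi*real n))) + (-1/(2*pi*real (Suc n)))
     = -(2 * harm (Suc n) - inverse (real (Suc n))) / (2*pi)"
proof -
  have e1: "1/(2*pi*real n) = inverse (real n) / (2*pi)" by (simp add: inverse_eq_divide)
  have e2: "1/(2*pi*real (Suc n)) = inverse (real (Suc n)) / (2*pi)" by (simp add: inverse_eq_divide)
  have h: "harm (Suc n) = harm n + inverse (real (Suc n))" by (simp add: harm_Suc)
  show ?thesis unfolding h by (rule harm_aux[OF e1 e2])
qed

definition Sn :: "nat \<Rightarrow> real \<Rightarrow> real" where
  "Sn n v = (1 - cos (2 * pi * real n * v)) * cot (pi * v)"

lemma int_v_Sn: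
  "((\<lambda>v. v * Sn n v) has_integral (-(2 * harm n - inverse (real n)) / (2*pi))) {0<..<1}"
proof (induction n)
  case 0
  then show ?case by (simp add: Sn_def harm_def)
next
  case (Suc n)
  have eq: "v * Sn (Suc n) v = (v * Sn n v + v * sin (2 * pi * real n * v))
              + v * sin (2 * pi * real (Suc n) * v)" if "v \<in> {0<..<1}" for v
  proof -
    have "sin (pi * v) \<noteq> 0" using that by (intro sin_gt_zero[THEN less_imp_neq, symmetric]) auto
    from trig_step[OF this, of "2 * pi * real n * v"]
    have "(1 - cos (2 * pi * real (Suc n) * v)) * cot (pi * v) - (1 - cos (2 * pi * real n * v)) * cot (pi * v)
       = sin (2 * pi * real n * v) + sin (2 * pi * real (Suc n) * v)"
      by (simp add: algebra_simps)
    then show ?thesis unfolding Sn_def by (simp add: algebra_simps)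
  qed
  have i1: "((\<lambda>v. (v * sin (2 * pi * real m * v))) has_integral (-1/(2*pi*real m))) {0<..<1}" for m
    using int_v_sin[of m] by (simp add: has_integral_Icc_iff_Ioo)
  have "((\<lambda>v. (v * Sn n v + v * sin (2 * pi * real n * v)) + v * sin (2 * pi * real (Suc n) * v)) has_integral
     ((-(2 * harm n - inverse (real n)) / (2*pi) + (-1/(2*pi*real n))) + (-1/(2*pi*real (Suc n))))) {0<..<1}"
    by (intro has_integral_add Suc i1)
  moreover have "(-(2 * harm n - inverse (real n)) / (2*pi) + (-1/(2*pi*real n))) + (-1/(2*pi*real (Suc n)))
     = -(2 * harm (Suc n) - inverse (real (Suc n))) / (2*pi)"
    by (rule harm_step)
  ultimately show ?case
    by (subst has_integral_cong[OF eq]) auto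
qed


definition HH :: "complex \<Rightarrow> complex \<Rightarrow> complex" where
  "HH k z = (z powr k - z) * (cos (of_real pi * z) / sin (of_real pi * z))"

definition hk :: "complex \<Rightarrow> real \<Rightarrow> complex" where
  "hk k v = ((of_real v) powr k - of_real v) * of_real (cot (pi * v))"

definition US :: "complex set" where "US = {z. 0 < Re z \<and> Re z < 1}"

lemma open_US: "open US"
  unfolding US_def by (intro open_Collect_conj open_halfspace_Re_gt open_halfspace_Re_lt)

lemma US_nonpos: "z \<in> US \<Longrightarrow> z \<notin> \<real>\<^sub>\<le>\<^sub>0"
  unfolding US_def by (auto simp: complex_nonpos_Reals_iff)

lemma US_sin: "z \<in> US \<Longrightarrow> sin (of_real pi * z) \<noteq> 0"
proof
  assume z: "z \<in> US" and "sin (of_real pi * z) = 0"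
  then obtain n :: int where n: "of_real pi * z = of_real (n * pi)" by (auto simp: sin_eq_0)
  then have "z = of_int n" by (simp add: field_simps) 
  with z show False unfolding US_def by auto
qed

lemma HH_holo: "HH k holomorphic_on US"
  unfolding HH_def using US_nonpos US_sin
  by (intro holomorphic_intros) auto

lemma hk_HH: "hk k v = HH k (of_real v)"
  unfolding hk_def HH_def cot_def
  by (simp flip: of_real_mult add: cos_of_real sin_of_real)

lemma of_real_US: "0 < v \<Longrightarrow> v < 1 \<Longrightarrow> complex_of_real v \<in> US"
  by (simp add: US_def)

lemma hk_cont: "continuous_on {0<..<1} (hk k)"
proof -
  have "continuous_on {0<..<1} (HH k \<circ> complex_of_real)"
    by (intro continuous_on_compose continuous_intros holomorphic_on_imp_continuous_on
         holomorphic_on_subset[OF HH_holo]) (auto simp: US_def)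
  then show ?thesis by (simp add: o_def hk_HH[abs_def])
qed

lemma abs_cot_le: assumes "0 < x" "x \<le> pi/2" shows "\<bar>cot x\<bar> \<le> 1/x"
proof (cases "x = pi/2")
  case True then have "cos x = cos (pi/2)" by (simp only:)
  then have "cos x = 0" by simp
  then show ?thesis using assms by (simp add: cot_def)
next
  case False
  then have "x < pi/2" using assms by auto
  then have "x \<le> \<bar>tan x\<bar>" using abs_tan_ge[of x] assms by auto
  moreover have "cot x = 1 / tan x" by (simp add: cot_def tan_def)
  moreover have "tan x > 0" using \<open>x < pi/2\<close> assms by (intro tan_gt_zero) auto
  ultimately show ?thesis using assms
    by (auto intro!: frac_le)
qed

lemma hk_bound0:
  assumes "Re k > 0" "0 < v" "v \<le> 1/2"
  shows "norm (hk k v) \<le> v powr (Re k - 1) + 1"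
proof -
  have c: "\<bar>cot (pi * v)\<bar> \<le> 1/(pi * v)" using assms by (intro abs_cot_le) auto
  have "norm (hk k v) \<le> (norm ((of_real v) powr k) + v) * \<bar>cot (pi * v)\<bar>"
    unfolding hk_def norm_mult norm_of_real using assms
    by (intro mult_right_mono order_trans[OF norm_triangle_ineq4]) auto
  also have "norm ((of_real v :: complex) powr k) = v powr Re k"
    using assms by (subst norm_powr_real_powr) auto
  also have "(v powr Re k + v) * \<bar>cot (pi * v)\<bar> \<le> (v powr Re k + v) * (1/(pi * v))"
    using assms c by (intro mult_left_mono) auto
  also have "\<dots> = (v powr Re k / v) / pi + 1/pi" using assms by (simp add: field_simps)
  also have "v powr Re k / v = v powr (Re k - 1)" using assms by (simp add: powr_diff)
  also have "v powr (Re k - 1) / pi + 1/pi \<le> v powr (Re k - 1) + 1"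
  proof -
    have p: "0 \<le> v powr (Re k - 1)" by simp
    have "v powr (Re k - 1) * 1 \<le> v powr (Re k - 1) * pi"
      using pi_gt3 by (intro mult_left_mono[OF _ p]) auto
    then show ?thesis using pi_gt3 by (intro add_mono) (auto simp: divide_simps)
  qed
  finally show ?thesis .
qed

lemma hk_bound1:
  obtains B where "\<And>v. 1/2 \<le> v \<Longrightarrow> v < 1 \<Longrightarrow> norm (hk k v) \<le> B"
proof -
  define S where "S = cball (1::complex) (1/2)"
  define f' where "f' z = k * z powr (k - 1) - 1" for z
  have S: "z \<in> S \<Longrightarrow> z \<notin> \<real>\<^sub>\<le>\<^sub>0" for z
    unfolding S_def dist_norm
    using complex_Re_le_cmod[of "1 - z"] by (auto simp: complex_nonpos_Reals_iff dist_norm)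
  have "continuous_on S f'" unfolding f'_def
    by (intro holomorphic_on_imp_continuous_on holomorphic_intros) (use S in auto)
  then have "compact (f' ` S)" by (intro compact_continuous_image) (auto simp: S_def)
  then have "bounded (f' ` S)" by (rule compact_imp_bounded)
  then obtain B where B0: "\<forall>x\<in>f' ` S. norm x \<le> B"
    unfolding bounded_iff by auto
  then have B: "\<And>z. z \<in> S \<Longrightarrow> norm (f' z) \<le> B" by auto
  have lip: "norm ((x powr k - x) - (y powr k - y)) \<le> B * norm (x - y)" if "x \<in> S" "y \<in> S" for x y
  proof (rule field_differentiable_bound[of S _ f' B])
    show "convex S" by (simp add: S_def)
    fix z assume "z \<in> S"
    then show "((\<lambda>x. x powr k - x) has_field_derivative f' z) (at z within S)" 
      unfolding f'_def using S
      by (intro derivative_eq_intros has_field_derivative_at_within[OF has_field_derivative_powr]) auto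
    show "norm (f' z) \<le> B" using B \<open>z \<in> S\<close> .
  qed (use that in auto)
  show ?thesis
  proof (rule that[of "B / pi"])
    fix v :: real assume v: "1/2 \<le> v" "v < 1"
    have nv: "norm (1 - complex_of_real v) = \<bar>1 - v\<bar>" by (metis norm_of_real of_real_1 of_real_diff)
    have inS: "complex_of_real v \<in> S" "1 \<in> S" using v nv by (auto simp: S_def dist_norm)
    have nB: "norm ((of_real v) powr k - of_real v :: complex) \<le> B * (1 - v)"
    proof -
      have "norm (complex_of_real v - 1) = \<bar>v - 1\<bar>" by (metis norm_of_real of_real_1 of_real_diff)
      then have nv2: "norm (complex_of_real v - 1) = 1 - v" using v by simp
      have "norm (((of_real v :: complex) powr k - of_real v) - (1 powr k - 1)) \<le> B * norm (complex_of_real v - 1)"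
        by (rule lip[OF inS])
      then show ?thesis using nv2 by simp
    qed
    moreover have "\<bar>cot (pi * v)\<bar> \<le> 1/(pi * (1-v))"
    proof -
      have "cot (pi * v) = - cot (pi * (1 - v))" 
        by (simp add: cot_def right_diff_distrib)
      then show ?thesis using v by (simp, intro abs_cot_le) auto
    qed
    moreover have "0 \<le> B * (1 - v)" by (rule order_trans[OF norm_ge_zero nB])
    ultimately have "norm (hk k v) \<le> (B * (1 - v)) * (1/(pi * (1-v)))"
      unfolding hk_def norm_mult norm_of_real by (intro mult_mono) auto
    also have "\<dots> = B / pi" using v by (simp add: field_simps)
    finally show "norm (hk k v) \<le> B / pi" .
  qed
qed

lemma hk_absint:
  assumes "Re k > 0"
  shows "hk k absolutely_integrable_on {0..1}"
proof -
  obtain B where B: "\<And>v. 1/2 \<le> v \<Longrightarrow> v < 1 \<Longrightarrow> norm (hk k v) \<le> B"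
    using hk_bound1 by blast
  have "hk k absolutely_integrable_on {0<..<1}"
  proof (rule measurable_bounded_by_integrable_imp_absolutely_integrable)
    show "hk k \<in> borel_measurable (lebesgue_on {0<..<1})"
      by (intro continuous_imp_measurable_on_sets_lebesgue hk_cont) auto
    show "{0<..<1::real} \<in> sets lebesgue" by simp
    have "(\<lambda>v. v powr (Re k - 1) + (1 + \<bar>B\<bar>)) integrable_on {0..1}"
      using assms by (intro integrable_add integrable_on_powr_from_0) auto
    then show "(\<lambda>v. v powr (Re k - 1) + (1 + \<bar>B\<bar>)) integrable_on {0<..<1}"
      by (simp add: integrable_on_open_interval_real)
    fix v :: real assume v: "v \<in> {0<..<1}"
    show "norm (hk k v) \<le> v powr (Re k - 1) + (1 + \<bar>B\<bar>)"
    proof (cases "v \<le> 1/2")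
      case True
      then show ?thesis using hk_bound0[OF assms, of v] v by auto
    next
      case False
      have "0 \<le> v powr (Re k - 1)" by simp
      moreover have "norm (hk k v) \<le> B" using B v False by auto
      ultimately show ?thesis by (smt (verit))
    qed
  qed
  then show ?thesis by (simp add: absolutely_integrable_on_Icc_iff_Ioo)
qed

lemma mid_bound:
  assumes "0 < a" "a \<le> b" "b < 1"
  obtains M where "\<And>n. n > 0 \<Longrightarrow>
     norm (integral {a..b} (\<lambda>v. hk k v * of_real (cos (2 * pi * real n * v)))) \<le> M / real n"
proof -
  have sub: "complex_of_real ` {a..b} \<subseteq> US" using assms by (auto simp: US_def)
  have cH: "continuous_on {a..b} (\<lambda>v. HH k (of_real v))"
    by (intro continuous_on_compose2[OF holomorphic_on_imp_continuous_on[OF HH_holo]] continuous_intros)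
       (use sub in auto)
  have cD: "continuous_on {a..b} (\<lambda>v. deriv (HH k) (of_real v))"
    by (intro continuous_on_compose2[OF holomorphic_on_imp_continuous_on[OF holomorphic_deriv[OF HH_holo open_US]]]
        continuous_intros) (use sub in auto)
  have "compact ((\<lambda>v. norm (HH k (of_real v)) + norm (deriv (HH k) (of_real v))) ` {a..b})"
    by (intro compact_continuous_image continuous_intros cH cD) auto
  then have "bounded ((\<lambda>v. norm (HH k (of_real v)) + norm (deriv (HH k) (of_real v))) ` {a..b})"
    by (rule compact_imp_bounded)
  then obtain K where K0': "\<forall>x\<in>(\<lambda>v. norm (HH k (of_real v)) + norm (deriv (HH k) (of_real v))) ` {a..b}. norm x \<le> K"
    unfolding bounded_iff by auto
  have K: "norm (HH k (of_real v)) + norm (deriv (HH k) (of_real v)) \<le> K" if "v \<in> {a..b}" for v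
    using K0' that by fastforce
  have K0: "K \<ge> 0" using K[of a] assms by (smt (verit) atLeastAtMost_iff norm_ge_zero)
  show ?thesis
  proof (rule that[of K])
    fix n :: nat assume n: "n > 0"
    define c where "c = 2 * pi * real n"
    have c: "c > 0" using n by (simp add: c_def)
    define G where "G v = HH k (of_real v) * of_real (sin (c * v) / c)" for v
    define D where "D v = deriv (HH k) (of_real v) * of_real (sin (c * v) / c)" for v
    have deriv: "(G has_vector_derivative (HH k (of_real v) * of_real (cos (c * v)) + D v)) (at v within {a..b})"
      if v: "v \<in> {a..b}" for v
    proof -
      have vU: "complex_of_real v \<in> US" using sub v by auto
      have d1: "((\<lambda>v. HH k (of_real v)) has_vector_derivative deriv (HH k) (of_real v)) (at v within {a..b})"
        by (rule has_vector_derivative_real_field[OF holomorphic_derivI[OF HH_holo open_US vU]])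
      have d2: "((\<lambda>v. complex_of_real (sin (c * v) / c)) has_vector_derivative of_real (cos (c * v))) (at v within {a..b})"
        using c by (auto intro!: derivative_eq_intros)
      show ?thesis using has_vector_derivative_mult[OF d1 d2] unfolding G_def D_def by (simp add: algebra_simps)
    qed
    have ftc: "((\<lambda>v. HH k (of_real v) * of_real (cos (c * v)) + D v) has_integral (G b - G a)) {a..b}"
      using assms by (intro fundamental_theorem_of_calculus deriv) auto
    have cDD: "continuous_on {a..b} D" unfolding D_def using c by (intro continuous_intros cD) auto
    have iD: "(D has_integral integral {a..b} D) {a..b}"
      using cDD by (intro integrable_integral integrable_continuous_interval)
    have "((\<lambda>v. hk k v * of_real (cos (2 * pi * real n * v))) has_integral (G b - G a - integral {a..b} D)) {a..b}"
      using has_integral_diff[OF ftc iD] by (simp add: hk_HH c_def)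
    then have eq: "integral {a..b} (\<lambda>v. hk k v * of_real (cos (2 * pi * real n * v))) = G b - G a - integral {a..b} D"
      by (rule integral_unique)
    have bG: "norm (G v) \<le> K / c" if "v \<in> {a..b}" for v
    proof -
      have "norm (G v) = norm (HH k (of_real v)) * (\<bar>sin (c * v)\<bar> / c)"
        unfolding G_def norm_mult norm_of_real using c by simp
      also have "\<dots> \<le> K * (1 / c)"
        using K[OF that] c K0 norm_ge_zero[of "deriv (HH k) (of_real v)"]
        by (intro mult_mono) (linarith, auto intro!: divide_right_mono simp: abs_sin_le_one)
      finally show ?thesis by simp
    qed
    have bD: "norm (integral {a..b} D) \<le> K / c * (b - a)"
    proof (rule integral_bound[OF \<open>a \<le> b\<close> cDD])
      fix v assume v: "v \<in> {a..b}"
      have "norm (D v) = norm (deriv (HH k) (of_real v)) * (\<bar>sin (c * v)\<bar> / c)"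
        unfolding D_def norm_mult norm_of_real using c by simp
      also have "\<dots> \<le> K * (1 / c)"
        using K[OF v] c K0 norm_ge_zero[of "HH k (of_real v)"]
        by (intro mult_mono) (linarith, auto intro!: divide_right_mono simp: abs_sin_le_one)
      finally show "norm (D v) \<le> K / c" by simp
    qed
    have "norm (G b - G a - integral {a..b} D) \<le> K / c + K / c + K / c * (b - a)"
      using bG[of a] bG[of b] bD assms by (smt (verit) atLeastAtMost_iff norm_triangle_ineq4)
    also have "\<dots> \<le> 3 * K / c"
    proof -
      have "K / c * (b - a) \<le> K / c" using assms K0 c by (intro mult_left_le) auto
      then show ?thesis by simp
    qed
    also have "\<dots> \<le> K / real n"
      using K0 n pi_gt3 unfolding c_def by (simp add: field_simps mult_left_mono)
    finally show "norm (integral {a..b} (\<lambda>v. hk k v * of_real (cos (2 * pi * real n * v)))) \<le> K / real n"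
      by (simp add: eq)
  qed
qed

lemma hkcos_int:
  assumes "Re k > 0"
  shows "(\<lambda>v. hk k v * of_real (cos (2 * pi * real n * v))) integrable_on {0..1}"
proof (rule measurable_bounded_by_integrable_imp_integrable)
  have m: "hk k \<in> borel_measurable (lebesgue_on {0..1})"
    using hk_absint[OF assms] absolutely_integrable_measurable[of "{0..1::real}"] by auto
  have "(\<lambda>v. complex_of_real (cos (2 * pi * real n * v))) \<in> borel_measurable (lebesgue_on {0..1})"
    by (intro continuous_imp_measurable_on_sets_lebesgue continuous_intros) auto
  with m show "(\<lambda>v. hk k v * of_real (cos (2 * pi * real n * v))) \<in> borel_measurable (lebesgue_on {0..1})"
    by (intro borel_measurable_times) 
  show "(\<lambda>v. norm (hk k v)) integrable_on {0..1}"
    using hk_absint[OF assms] by (simp add: absolutely_integrable_on_def)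
  fix v :: real
  show "norm (hk k v * of_real (cos (2 * pi * real n * v))) \<le> norm (hk k v)"
    unfolding norm_mult norm_of_real by (simp add: abs_cos_le_one mult_left_le)
qed auto

lemma RL:
  assumes "Re k > 0"
  shows "(\<lambda>n. integral {0..1} (\<lambda>v. hk k v * of_real (cos (2 * pi * real n * v)))) \<longlonglongrightarrow> 0"
proof (rule LIMSEQ_I)
  fix r :: real assume r: "r > 0"
  define e where "e = r / 3"
  have e: "e > 0" using r by (simp add: e_def)
  define N where "N v = norm (hk k v)" for v
  have iN: "N integrable_on {0..1}"
    using hk_absint[OF assms] by (simp add: absolutely_integrable_on_def N_def[abs_def])
  define f where "f n v = hk k v * of_real (cos (2 * pi * real n * v))" for n v
  have if_: "f n integrable_on {0..1}" for n unfolding f_def by (rule hkcos_int[OF assms])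
  have nf: "norm (f n v) \<le> N v" for n v
    unfolding f_def N_def norm_mult norm_of_real by (simp add: abs_cos_le_one mult_left_le)
  obtain d1 where d1: "d1 > 0" "\<And>t. t \<in> {0..1} \<Longrightarrow> dist t 0 < d1 \<Longrightarrow>
       dist (integral {0..t} N) (integral {0..0} N) < e"
    using indefinite_integral_continuous_1[OF iN] e unfolding continuous_on_iff
    by (metis atLeastAtMost_iff order_refl zero_le_one)
  obtain d2 where d2: "d2 > 0" "\<And>t. t \<in> {0..1} \<Longrightarrow> dist t 1 < d2 \<Longrightarrow>
       dist (integral {t..1} N) (integral {1..1} N) < e"
    using indefinite_integral_continuous_1'[OF iN] e unfolding continuous_on_iff
    by (metis atLeastAtMost_iff order_refl zero_le_one)
  define \<delta> where "\<delta> = min (min d1 d2) (1/4) / 2"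
  have \<delta>: "0 < \<delta>" "\<delta> < d1" "\<delta> < d2" "\<delta> \<le> 1/8" using d1 d2 by (auto simp: \<delta>_def)
  have P1: "integral {0..\<delta>} N < e" using d1(2)[of \<delta>] \<delta> by (auto simp: dist_real_def)
  have P2: "integral {1-\<delta>..1} N < e" using d2(2)[of "1-\<delta>"] \<delta> by (auto simp: dist_real_def)
  obtain M where M: "\<And>n. n > 0 \<Longrightarrow> norm (integral {\<delta>..1-\<delta>} (f n)) \<le> M / real n"
    using mid_bound[of \<delta> "1-\<delta>" k] \<delta> unfolding f_def by auto
  define no where "no = nat \<lceil>\<bar>M\<bar> / e\<rceil> + 1"
  show "\<exists>no. \<forall>n\<ge>no. norm (integral {0..1} (\<lambda>v. hk k v * of_real (cos (2 * pi * real n * v))) - 0) < r"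
  proof (intro exI allI impI)
    fix n assume n: "n \<ge> no"
    then have n0: "n > 0" by (simp add: no_def)
    have "\<bar>M\<bar> / e < real n"
      using n unfolding no_def by linarith
    then have Mn: "M / real n < e" using e n0
      by (simp add: field_simps)
    have "integral {0..1} (f n) = integral {0..\<delta>} (f n) + integral {\<delta>..1} (f n)"
      using Henstock_Kurzweil_Integration.integral_combine[where a=0 and c=\<delta> and b=1 and f="f n"] \<delta> if_[of n] by simp
    also have "integral {\<delta>..1} (f n) = integral {\<delta>..1-\<delta>} (f n) + integral {1-\<delta>..1} (f n)"
      using Henstock_Kurzweil_Integration.integral_combine[where a=\<delta> and c="1-\<delta>" and b=1 and f="f n"] \<delta> integrable_on_subinterval[OF if_[of n], of \<delta> 1] by simp
    finally have eq: "integral {0..1} (f n) =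
       integral {0..\<delta>} (f n) + integral {\<delta>..1-\<delta>} (f n) + integral {1-\<delta>..1} (f n)" by simp
    have b1: "norm (integral {0..\<delta>} (f n)) \<le> integral {0..\<delta>} N"
      using \<delta> by (intro integral_norm_bound_integral integrable_on_subinterval[OF if_]
                   integrable_on_subinterval[OF iN] nf) auto
    have b2: "norm (integral {1-\<delta>..1} (f n)) \<le> integral {1-\<delta>..1} N"
      using \<delta> by (intro integral_norm_bound_integral integrable_on_subinterval[OF if_]
                   integrable_on_subinterval[OF iN] nf) auto
    have "norm (integral {0..1} (f n)) < e + e + e"
      unfolding eq using b1 b2 P1 P2 M[OF n0] Mn
      by (smt (verit) norm_triangle_ineq)
    then show "norm (integral {0..1} (\<lambda>v. hk k v * of_real (cos (2 * pi * real n * v))) - 0) < r"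
    proof -
      have "(\<lambda>v. hk k v * of_real (cos (2 * pi * real n * v))) = f n" by (simp add: f_def fun_eq_iff)
      then show ?thesis using \<open>norm (integral {0..1} (f n)) < e + e + e\<close> by (simp add: e_def)
    qed
  qed
qed


lemma integral_reflect01:
  fixes g :: "real \<Rightarrow> complex"
  shows "integral {0..1} (\<lambda>u. g (1 - u)) = integral {0..1} g"
proof -
  have "integral {0..1} (\<lambda>u. g (1 - u)) = integral {- 0..- (-1)} (\<lambda>u. (g \<circ> (+) 1) (- u))"
    by (simp add: o_def)
  also have "\<dots> = integral {-1..0} (g \<circ> (+) 1)" by (rule Henstock_Kurzweil_Integration.integral_reflect_real)
  also have "\<dots> = integral {-1+1..0+1} g" by (rule integral_shift_Icc_real)
  finally show ?thesis by simp
qed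

lemma Sn_reflect: "Sn n (1 - v) = - Sn n v"
proof -
  have e: "2 * pi * real n = real (2*n) * pi" by simp
  have "cos (2 * pi * real n * (1 - v)) = cos (2 * pi * real n * v)"
    by (simp add: right_diff_distrib cos_diff e del: of_nat_mult)
  moreover have "cot (pi * (1 - v)) = - cot (pi * v)"
    by (simp add: cot_def right_diff_distrib)
  ultimately show ?thesis by (simp add: Sn_def)
qed

theorem mainTheorem5:
  fixes k :: complex
  assumes "Re k > 0"
  shows "(\<lambda>n::nat.
            integral {0..1} (\<lambda>u::real. (of_real (1 - u)) powr k
                 * of_real ((1 - cos (2 * pi * real n * u)) * cot (pi * u)))
          - (of_real ((euler_mascheroni + ln (real n)) / pi)
             - integral {0..1} (\<lambda>u::real. ((of_real u) powr k - of_real u) * of_real (cot (pi * u)))))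
         \<longlonglongrightarrow> 0"
proof -
  define B where "B = integral {0..1} (hk k)"
  define J where "J n = integral {0..1} (\<lambda>v. hk k v * of_real (cos (2 * pi * real n * v)))" for n
  define T where "T n = -(2 * harm n - inverse (real n)) / (2*pi)" for n
  define E where "E n = T n + (euler_mascheroni + ln (real n)) / pi" for n
  have A: "integral {0..1} (\<lambda>u::real. (of_real (1 - u)) powr k
                 * of_real ((1 - cos (2 * pi * real n * u)) * cot (pi * u))) = J n - B - of_real (T n)" for n
  proof -
    have "integral {0..1} (\<lambda>u::real. (of_real (1 - u)) powr k
                 * of_real ((1 - cos (2 * pi * real n * u)) * cot (pi * u)))
        = integral {0..1} (\<lambda>u. (\<lambda>v. of_real v powr k * of_real (Sn n (1 - v))) (1 - u))"
      by (simp add: Sn_def)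
    also have "\<dots> = integral {0..1} (\<lambda>v. of_real v powr k * of_real (Sn n (1 - v)))"
      by (rule integral_reflect01)
    also have "\<dots> = integral {0<..<1} (\<lambda>v. of_real v powr k * of_real (Sn n (1 - v)))"
      by (rule integral_open_interval_real)
    also have "\<dots> = J n - B - of_real (T n)"
    proof (rule integral_unique)
      have h1: "(hk k has_integral B) {0<..<1}"
        unfolding B_def using hk_absint[OF assms]
        by (simp add: has_integral_Icc_iff_Ioo[symmetric] absolutely_integrable_on_def integrable_integral)
      have h2: "((\<lambda>v. hk k v * of_real (cos (2 * pi * real n * v))) has_integral J n) {0<..<1}"
        unfolding J_def using hkcos_int[OF assms, of n]
        by (simp add: has_integral_Icc_iff_Ioo[symmetric] integrable_integral)
      have h3: "((\<lambda>v. complex_of_real (v * Sn n v)) has_integral of_real (T n)) {0<..<1}"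
        unfolding T_def by (intro has_integral_of_real int_v_Sn)
      have "((\<lambda>v. - ((hk k v - hk k v * of_real (cos (2 * pi * real n * v))) + complex_of_real (v * Sn n v)))
              has_integral - ((B - J n) + of_real (T n))) {0<..<1}"
        by (intro has_integral_neg has_integral_add has_integral_diff h1 h2 h3)
      moreover have "- ((hk k v - hk k v * of_real (cos (2 * pi * real n * v))) + complex_of_real (v * Sn n v))
          = of_real v powr k * of_real (Sn n (1 - v))" for v
        unfolding Sn_reflect by (simp add: hk_def Sn_def algebra_simps)
      ultimately show "((\<lambda>v. of_real v powr k * of_real (Sn n (1 - v))) has_integral J n - B - of_real (T n)) {0<..<1}"
        by (simp add: algebra_simps)
    qed
    finally show ?thesis .
  qed
  have eq: "(\<lambda>n::nat.
            integral {0..1} (\<lambda>u::real. (of_real (1 - u)) powr k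
                 * of_real ((1 - cos (2 * pi * real n * u)) * cot (pi * u)))
          - (of_real ((euler_mascheroni + ln (real n)) / pi)
             - integral {0..1} (\<lambda>u::real. ((of_real u) powr k - of_real u) * of_real (cot (pi * u)))))
      = (\<lambda>n. J n - of_real (E n))"
    by (rule ext) (simp only: A B_def hk_def[abs_def], simp add: E_def algebra_simps)
  have "E = (\<lambda>n. - (((harm n - ln (real n)) - euler_mascheroni) - inverse (real n) / 2) / pi)"
    by (rule ext) (simp add: E_def T_def field_simps)
  moreover have "(\<lambda>n. - (((harm n - ln (real n)) - euler_mascheroni) - inverse (real n) / 2) / pi) \<longlonglongrightarrow>
      - ((euler_mascheroni - euler_mascheroni) - 0 / 2) / pi"
    by (intro tendsto_intros euler_mascheroni_LIMSEQ lim_inverse_n) auto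
  ultimately have "E \<longlonglongrightarrow> 0" by simp
  then have "(\<lambda>n. J n - of_real (E n)) \<longlonglongrightarrow> 0 - of_real 0"
    unfolding J_def by (intro tendsto_intros RL[OF assms])
  then show ?thesis unfolding eq by simp
qed

end
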